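(* Let $\mathbf{L}=\langle L,\leq,0,1\rangle$ be a totally ordered complete lattice and let $\mathcal{D}_1,\mathcal{D}_2$ be ranked data tables on the same relation scheme $R$. Then $\mathcal{D}_1\equiv\mathcal{D}_2$ if and only if there is an order isomorphism $f\colon L(\mathcal{D}_1)\to L(\mathcal{D}_2)$ such that $\mathcal{D}_1\circ f=\mathcal{D}_2$.
   Context: A relation scheme $R$ is a finite set of attributes, each with a (at most countable) set of admissible values; a tuple on $R$ assigns to each attribute of $R$ an admissible value; $\mathrm{Tupl}(R)$ is the set of all tuples on $R$. A ranked data table (RDT) on $R$ is a map $\mathcal{D}\colon\mathrm{Tupl}(R)\to L$ with $\{r;\ \mathcal{D}(r)>0\}$ finite. Its range is $L(\mathcal{D})=\{\mathcal{D}(r);\ r\in\mathrm{Tupl}(R)\}\subseteq L$. For an RDT $\mathcal{D}$ and $r\in\mathrm{Tupl}(R)$, $\mathcal{U}(\mathcal{D},r)=\{r'\in\mathrm{Tupl}(R);\ \mathcal{D}(r')\geq\mathcal{D}(r)\}$; $\mathcal{D}_1\sqsubseteq\mathcal{D}_2$ means $\mathcal{U}(\mathcal{D}_1,r)\subseteq\mathcal{U}(\mathcal{D}_2,r)$ for all $r$; $\mathcal{D}_1\equiv\mathcal{D}_2$ (ordinal equivalence) means $\mathcal{D}_1\sqsubseteq\mathcal{D}_2$ and $\mathcal{D}_2\sqsubseteq\mathcal{D}_1$. For $L_1,L_2\subseteq L$, a map $f\colon L_1\to L_2$ is an order isomorphism if it is surjective and satisfies $a\leq b \iff f(a)\leq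 f(b)$ for all $a,b\in L_1$. $\mathcal{D}\circ f$ denotes the map $r\mapsto f(\mathcal{D}(r))$. *)

theory Defs
  imports Main "HOL-Library.Countable_Set"
begin

definition relation_scheme :: "'a set \<Rightarrow> ('a \<Rightarrow> 'v set) \<Rightarrow> bool" where
  "relation_scheme R Dom \<longleftrightarrow> finite R \<and> (\<forall>a\<in>R. countable (Dom a))"

definition Tupl :: "'a set \<Rightarrow> ('a \<Rightarrow> 'v set) \<Rightarrow> ('a \<Rightarrow> 'v) set" where
  "Tupl R Dom = {r. (\<forall>a\<in>R. r a \<in> Dom a) \<and> (\<forall>a. a \<notin> R \<longrightarrow> r a = undefined)}"

text \<open>Ranked data table: only its values on Tupl R Dom matter; finitely many tuples
 have rank > 0 (0 = bot of the complete lattice).\<close>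
definition rdt :: "'a set \<Rightarrow> ('a \<Rightarrow> 'v set) \<Rightarrow> (('a \<Rightarrow> 'v) \<Rightarrow> 'l::complete_linorder) \<Rightarrow> bool" where
  "rdt R Dom D \<longleftrightarrow> finite {r \<in> Tupl R Dom. D r > bot}"

definition rng :: "'a set \<Rightarrow> ('a \<Rightarrow> 'v set) \<Rightarrow> (('a \<Rightarrow> 'v) \<Rightarrow> 'l) \<Rightarrow> 'l set" where
  "rng R Dom D = D ` Tupl R Dom"

definition U :: "'a set \<Rightarrow> ('a \<Rightarrow> 'v set) \<Rightarrow> (('a \<Rightarrow> 'v) \<Rightarrow> 'l::complete_linorder) \<Rightarrow> ('a \<Rightarrow> 'v) \<Rightarrow> ('a \<Rightarrow> 'v) set" where
  "U R Dom D r = {r' \<in> Tupl R Dom. D r' \<ge> D r}"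

definition rdt_le :: "'a set \<Rightarrow> ('a \<Rightarrow> 'v set) \<Rightarrow> (('a \<Rightarrow> 'v) \<Rightarrow> 'l::complete_linorder) \<Rightarrow> (('a \<Rightarrow> 'v) \<Rightarrow> 'l) \<Rightarrow> bool" where
  "rdt_le R Dom D1 D2 \<longleftrightarrow> (\<forall>r\<in>Tupl R Dom. U R Dom D1 r \<subseteq> U R Dom D2 r)"

definition ord_equiv :: "'a set \<Rightarrow> ('a \<Rightarrow> 'v set) \<Rightarrow> (('a \<Rightarrow> 'v) \<Rightarrow> 'l::complete_linorder) \<Rightarrow> (('a \<Rightarrow> 'v) \<Rightarrow> 'l) \<Rightarrow> bool" where
  "ord_equiv R Dom D1 D2 \<longleftrightarrow> rdt_le R Dom D1 D2 \<and> rdt_le R Dom D2 D1"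

definition order_iso :: "'l::complete_linorder set \<Rightarrow> 'l set \<Rightarrow> ('l \<Rightarrow> 'l) \<Rightarrow> bool" where
  "order_iso L1 L2 f \<longleftrightarrow> f ` L1 = L2 \<and> (\<forall>a\<in>L1. \<forall>b\<in>L1. a \<le> b \<longleftrightarrow> f a \<le> f b)"

end

theory Submission
  imports Defs
begin

lemma equiv_iff:
  "ord_equiv R Dom D1 D2 \<longleftrightarrow>
   (\<forall>r\<in>Tupl R Dom. \<forall>r'\<in>Tupl R Dom. D1 r \<le> D1 r' \<longleftrightarrow> D2 r \<le> D2 r')"
  unfolding ord_equiv_def rdt_le_def U_def by blast

theorem theorem5:
  fixes R :: "'a set" and Dom :: "'a \<Rightarrow> 'v set"
    and D1 D2 :: "('a \<Rightarrow> 'v) \<Rightarrow> 'l::complete_linorder"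
  assumes "relation_scheme R Dom" and "rdt R Dom D1" and "rdt R Dom D2"
  shows "ord_equiv R Dom D1 D2 \<longleftrightarrow>
    (\<exists>f. order_iso (rng R Dom D1) (rng R Dom D2) f \<and>
         (\<forall>r\<in>Tupl R Dom. f (D1 r) = D2 r))"
proof
  assume e: "ord_equiv R Dom D1 D2"
  hence H: "\<forall>r\<in>Tupl R Dom. \<forall>r'\<in>Tupl R Dom. D1 r \<le> D1 r' \<longleftrightarrow> D2 r \<le> D2 r'"
    using equiv_iff by blast
  define f where "f a = D2 (SOME r. r \<in> Tupl R Dom \<and> D1 r = a)" for a
  have fD: "f (D1 r) = D2 r" if r: "r \<in> Tupl R Dom" for r
  proof -
    have ex: "\<exists>s. s \<in> Tupl R Dom \<and> D1 s = D1 r" using r by blast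
    obtain s where s: "s = (SOME s. s \<in> Tupl R Dom \<and> D1 s = D1 r)" by simp
    have "s \<in> Tupl R Dom \<and> D1 s = D1 r" using someI_ex[OF ex] s by simp
    hence "D2 s \<le> D2 r" "D2 r \<le> D2 s" using H r by (metis order_refl)+
    hence "D2 s = D2 r" by (rule order_antisym)
    thus ?thesis using s f_def by simp
  qed
  have "order_iso (rng R Dom D1) (rng R Dom D2) f"
    unfolding order_iso_def rng_def
  proof
    show "f ` D1 ` Tupl R Dom = D2 ` Tupl R Dom"
      using fD by (force simp: image_image)
    show "\<forall>a\<in>D1 ` Tupl R Dom. \<forall>b\<in>D1 ` Tupl R Dom. a \<le> b \<longleftrightarrow> f a \<le> f b"
      using fD H by auto
  qed
  thus "\<exists>f. order_iso (rng R Dom D1) (rng R Dom D2) f \<and> (\<forall>r\<in>Tupl R Dom. f (D1 r) = D2 r)"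
    using fD by blast
next
  assume "\<exists>f. order_iso (rng R Dom D1) (rng R Dom D2) f \<and> (\<forall>r\<in>Tupl R Dom. f (D1 r) = D2 r)"
  then obtain f where o: "order_iso (rng R Dom D1) (rng R Dom D2) f"
    and fD: "\<forall>r\<in>Tupl R Dom. f (D1 r) = D2 r" by blast
  have "\<forall>r\<in>Tupl R Dom. \<forall>r'\<in>Tupl R Dom. D1 r \<le> D1 r' \<longleftrightarrow> D2 r \<le> D2 r'"
  proof (intro ballI)
    fix r r' assume "r \<in> Tupl R Dom" "r' \<in> Tupl R Dom"
    moreover have "D1 r \<in> rng R Dom D1" "D1 r' \<in> rng R Dom D1"
      using calculation by (auto simp: rng_def)
    ultimately show "D1 r \<le> D1 r' \<longleftrightarrow> D2 r \<le> D2 r'"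
      using o fD unfolding order_iso_def by metis
  qed
  thus "ord_equiv R Dom D1 D2" using equiv_iff by blast
qed

end
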